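(* Let $Q=(-\frac12,\frac12)^N$ and let $f:\mathbb{R}^N\times\mathbb{R}^d\to[0,+\infty)$ be measurable and $Q$-periodic in the first variable, satisfying $C_1|\zeta|\le f(x,\zeta)\le C_2(1+|\zeta|)$, and Lipschitz continuous in the second variable with Lipschitz constant $L>0$, i.e. $|f(x,\zeta_1)-f(x,\zeta_2)|\le L|\zeta_1-\zeta_2|$ for all $x,\zeta_1,\zeta_2$. Let $\mathcal{A}=\sum_{i=1}^NA^{(i)}\partial_{x_i}$ with $A^{(i)}\in\mathbb{R}^{M\times d}$. Define, for $b\in\mathbb{R}^d$, $$f_{\mathcal{A}\text{-hom}}(b):=\inf_{R\in\mathbb{N}}\inf\Big\{\frac{1}{|RQ|}\int_{RQ}f(x,b+w(x))\,dx:\ w\in L^1_{RQ\text{-per}}(\mathbb{R}^N;\mathbb{R}^d),\ \mathcal{A}w=0,\ \frac{1}{|RQ|}\int_{RQ}w=0\Big\}.$$ Then $f_{\mathcal{A}\text{-hom}}:\mathbb{R}^d\to\mathbb{R}$ is Lipschitz continuous with Lipschitz constant $L$.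
   Context: $L^1_{RQ\text{-per}}(\mathbb{R}^N;\mathbb{R}^d)$ denotes functions integrable on $RQ$ extended $RQ$-periodically to $\mathbb{R}^N$; $\mathcal{A}w=0$ is meant in the sense of distributions on $\mathbb{R}^N$. *)

theory Defs
  imports "HOL-Analysis.Analysis"
begin

definition cubeQ :: "real \<Rightarrow> (real ^ 'n) set" where
  "cubeQ R = {x. \<forall>i. -(R/2) < x $ i \<and> x $ i < R/2}"

coinductive Cinf :: "('a::euclidean_space \<Rightarrow> real) \<Rightarrow> bool" where
  "(\<forall>x. g differentiable (at x)) \<Longrightarrow>
   (\<forall>v\<in>Basis. Cinf (\<lambda>x. frechet_derivative g (at x) v)) \<Longrightarrow> Cinf g"

definition test_fun :: "('a::euclidean_space \<Rightarrow> real) \<Rightarrow> bool" where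
  "test_fun \<phi> \<longleftrightarrow> Cinf \<phi> \<and> compact (closure {x. \<phi> x \<noteq> 0})"

definition pderiv_i :: "'n \<Rightarrow> (real ^ 'n \<Rightarrow> real) \<Rightarrow> real ^ 'n \<Rightarrow> real" where
  "pderiv_i i \<phi> x = frechet_derivative \<phi> (at x) (axis i 1)"

text \<open>\<A> w = 0 in the sense of distributions on R^N, where
  \<A> = sum_i A(i) d/dx_i, A(i) an M x d matrix.\<close>
definition A_free :: "('n::finite \<Rightarrow> real ^ 'd ^ 'm) \<Rightarrow> (real ^ 'n \<Rightarrow> real ^ 'd) \<Rightarrow> bool" where
  "A_free A w \<longleftrightarrow> (\<forall>\<phi>. test_fun \<phi> \<longrightarrow>
      (\<Sum>i\<in>UNIV. A i *v (\<integral>x. pderiv_i i \<phi> x *\<^sub>R w x \<partial>lborel)) = 0)"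

definition L1_per :: "nat \<Rightarrow> (real ^ 'n::finite \<Rightarrow> real ^ 'd) \<Rightarrow> bool" where
  "L1_per R w \<longleftrightarrow> set_integrable lborel (cubeQ (real R)) w \<and>
      (\<forall>x i. w (x + real R *\<^sub>R axis i 1) = w x)"

definition admissible :: "('n::finite \<Rightarrow> real ^ 'd ^ 'm) \<Rightarrow> nat \<Rightarrow> (real ^ 'n \<Rightarrow> real ^ 'd) set" where
  "admissible A R = {w. L1_per R w \<and> A_free A w \<and>
      (LINT x : cubeQ (real R) | lborel. w x) = 0}"

definition f_hom :: "(real ^ 'n::finite \<Rightarrow> real ^ 'd \<Rightarrow> real) \<Rightarrow> ('n \<Rightarrow> real ^ 'd ^ 'm)
     \<Rightarrow> real ^ 'd \<Rightarrow> real" where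
  "f_hom f A b = (INF R \<in> {1::nat..}. INF w \<in> admissible A R.
      (1 / measure lborel (cubeQ (real R) :: (real ^ 'n) set)) * (LINT x : cubeQ (real R) | lborel. f x (b + w x)))"

end

theory Submission
  imports Defs
begin
lemma cube_box: "cubeQ R = box (\<chi> i. -(R/2)) (\<chi> i. R/2 :: real ^ 'n)"
  by (auto simp: cubeQ_def mem_box_cart)
lemma cube_meas: "cubeQ R \<in> sets lborel" by (simp add: cube_box)
lemma cube_fin: "emeasure lborel (cubeQ R :: (real^'n) set) < \<infinity>"
  unfolding cube_box by (rule emeasure_bounded_finite) simp

lemma integ:
  fixes f :: "real ^ 'n::finite \<Rightarrow> real ^ 'd::finite \<Rightarrow> real"
  assumes meas: "(\<lambda>(x, z). f x z) \<in> borel_measurable borel"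
    and growth: "\<And>x z. 0 \<le> f x z \<and> f x z \<le> C2 * (1 + norm z)"
    and w: "set_integrable lborel (cubeQ R) w"
  shows "set_integrable lborel (cubeQ R) (\<lambda>x. f x (b + w x))"
proof -
  let ?S = "cubeQ R :: (real^'n) set"
  have wm: "(\<lambda>x. indicator ?S x *\<^sub>R w x) \<in> borel_measurable lborel"
    using w unfolding set_integrable_def by auto
  have pm: "(\<lambda>x. (x, b + indicator ?S x *\<^sub>R w x)) \<in> lborel \<rightarrow>\<^sub>M (borel :: ((real^'n) \<times> (real^'d)) measure)"
    unfolding borel_prod[symmetric]
    by (intro measurable_Pair borel_measurable_add wm) auto
  have fm: "(\<lambda>x. f x (b + indicator ?S x *\<^sub>R w x)) \<in> borel_measurable lborel"
    using measurable_compose[OF pm meas] by simp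
  have eq: "(\<lambda>x. indicator ?S x *\<^sub>R f x (b + w x)) = (\<lambda>x. indicator ?S x *\<^sub>R f x (b + indicator ?S x *\<^sub>R w x))"
    by (auto simp: indicator_def)
  have gi: "integrable lborel (\<lambda>x. C2 * (1 + norm b) * indicator ?S x + C2 * norm (indicator ?S x *\<^sub>R w x))"
  proof -
    have "integrable lborel (\<lambda>x. indicator ?S x :: real)"
      using cube_fin cube_meas by (intro integrable_real_indicator) auto
    moreover have "integrable lborel (\<lambda>x. norm (indicator ?S x *\<^sub>R w x))"
      using w unfolding set_integrable_def by (rule integrable_norm)
    ultimately show ?thesis by (intro Bochner_Integration.integrable_add integrable_mult_right) 
  qed
  show ?thesis unfolding set_integrable_def eq
  proof (rule Bochner_Integration.integrable_bound[OF gi])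
    show "(\<lambda>x. indicator ?S x *\<^sub>R f x (b + indicator ?S x *\<^sub>R w x)) \<in> borel_measurable lborel"
      using fm cube_meas by (intro borel_measurable_scaleR borel_measurable_indicator) auto
    show "AE x in lborel. norm (indicator ?S x *\<^sub>R f x (b + indicator ?S x *\<^sub>R w x))
       \<le> norm (C2 * (1 + norm b) * indicator ?S x + C2 * norm (indicator ?S x *\<^sub>R w x))"
    proof (rule AE_I2)
      fix x
      have C: "0 \<le> C2" using growth[of x 0] by simp
      show "norm (indicator ?S x *\<^sub>R f x (b + indicator ?S x *\<^sub>R w x))
       \<le> norm (C2 * (1 + norm b) * indicator ?S x + C2 * norm (indicator ?S x *\<^sub>R w x))"
      proof (cases "x \<in> ?S")
        case True
        have "f x (b + w x) \<le> C2 * (1 + norm b) + C2 * norm (w x)"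
          using growth[of x "b + w x"] norm_triangle_ineq[of b "w x"] C
          using mult_left_mono[of "norm (b + w x)" "norm b + norm (w x)" C2]
          by (simp add: algebra_simps)
        then show ?thesis using True growth[of x "b + w x"] C by auto
      qed auto
    qed
  qed
qed

lemma zero_adm: "(\<lambda>_. 0) \<in> admissible A R"
  by (simp add: admissible_def L1_per_def A_free_def set_integrable_def)

lemma val_nonneg:
  fixes f :: "real ^ 'n::finite \<Rightarrow> real ^ 'd::finite \<Rightarrow> real"
  assumes "\<And>x z. 0 \<le> f x z"
  shows "0 \<le> (1 / measure lborel (cubeQ R :: (real ^ 'n) set)) * (LINT x : cubeQ R | lborel. f x (b + w x))"
  unfolding set_lebesgue_integral_def using assms
  by (intro mult_nonneg_nonneg Bochner_Integration.integral_nonneg_AE) auto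

theorem proposition2p14:
  fixes f :: "real ^ 'n::finite \<Rightarrow> real ^ 'd::finite \<Rightarrow> real"
    and A :: "'n \<Rightarrow> real ^ 'd ^ 'm::finite"
    and C1 C2 L :: real
  assumes meas: "(\<lambda>(x, z). f x z) \<in> borel_measurable borel"
    and nonneg: "\<And>x z. 0 \<le> f x z"
    and per: "\<And>x z i. f (x + axis i 1) z = f x z"
    and C1: "0 < C1" and C2: "0 < C2"
    and growth: "\<And>x z. C1 * norm z \<le> f x z \<and> f x z \<le> C2 * (1 + norm z)"
    and L: "0 < L"
    and lip: "\<And>x z1 z2. \<bar>f x z1 - f x z2\<bar> \<le> L * norm (z1 - z2)"
  shows "lipschitz_on L UNIV (f_hom f A)"
proof -
  define V where "V b R w = (1 / measure lborel (cubeQ (real R) :: (real ^ 'n) set)) * (LINT x : cubeQ (real R) | lborel. f x (b + w x))"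
    for b and R :: nat and w :: "real ^ 'n \<Rightarrow> real ^ 'd"
  have g2: "\<And>x z. 0 \<le> f x z \<and> f x z \<le> C2 * (1 + norm z)" using nonneg growth by blast
  have key: "V b R w \<le> V b' R w + L * dist b b'" if w: "w \<in> admissible A R" for b b' R w
  proof -
    let ?S = "cubeQ (real R) :: (real ^ 'n) set"
    have wi: "set_integrable lborel ?S w" using w by (simp add: admissible_def L1_per_def)
    have i1: "set_integrable lborel ?S (\<lambda>x. f x (b + w x))" by (rule integ[OF meas g2 wi])
    have i2: "set_integrable lborel ?S (\<lambda>x. f x (b' + w x))" by (rule integ[OF meas g2 wi])
    have ic: "set_integrable lborel ?S (\<lambda>x. L * dist b b')"
    proof -
      have "integrable lborel (\<lambda>x. indicator ?S x :: real)"
        using cube_fin cube_meas by (intro integrable_real_indicator) auto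
      then have "integrable lborel (\<lambda>x. indicator ?S x * (L * dist b b'))"
        by (rule integrable_mult_left)
      then show ?thesis unfolding set_integrable_def by simp
    qed
    have "(LINT x : ?S | lborel. f x (b + w x)) \<le> (LINT x : ?S | lborel. f x (b' + w x) + L * dist b b')"
    proof (rule set_integral_mono[OF i1 set_integral_add(1)[OF i2 ic]])
      fix x
      have "f x (b + w x) - f x (b' + w x) \<le> L * norm ((b + w x) - (b' + w x))"
        using lip[of x "b + w x" "b' + w x"] by linarith
      then show "f x (b + w x) \<le> f x (b' + w x) + L * dist b b'" by (simp add: dist_norm)
    qed
    also have "\<dots> = (LINT x : ?S | lborel. f x (b' + w x)) + measure lborel ?S * (L * dist b b')"
    proof -
      have "(LINT x : ?S | lborel. (L * dist b b')) = measure lborel ?S * (L * dist b b')"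
        using set_integral_const[OF cube_meas, of "real R" "L * dist b b'"] cube_fin[of "real R"]
        by (simp add: less_top[symmetric] mult.commute)
      then show ?thesis using set_integral_add(2)[OF i2 ic] by simp
    qed
    finally have I: "(LINT x : ?S | lborel. f x (b + w x)) \<le> (LINT x : ?S | lborel. f x (b' + w x)) + measure lborel ?S * (L * dist b b')" .
    have m0: "0 \<le> 1 / measure lborel ?S" by simp
    have "V b R w \<le> (1 / measure lborel ?S) * ((LINT x : ?S | lborel. f x (b' + w x)) + measure lborel ?S * (L * dist b b'))"
      unfolding V_def by (rule mult_left_mono[OF I m0])
    also have "\<dots> = V b' R w + (1 / measure lborel ?S) * measure lborel ?S * (L * dist b b')"
      unfolding V_def by (simp add: algebra_simps)
    also have "\<dots> \<le> V b' R w + L * dist b b'"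
    proof -
      have "(1 / measure lborel ?S) * measure lborel ?S \<le> 1" by (cases "measure lborel ?S = 0") auto
      moreover have "0 \<le> L * dist b b'" using L by simp
      ultimately show ?thesis using mult_right_mono by fastforce
    qed
    finally show ?thesis .
  qed
  have fh: "f_hom f A b = (INF R \<in> {1::nat..}. INF w \<in> admissible A R. V b R w)" for b
    unfolding f_hom_def V_def by simp
  have Vnn: "0 \<le> V b R w" for b R w unfolding V_def by (rule val_nonneg[OF nonneg])
  have bddI: "bdd_below ((\<lambda>w. V b R w) ` admissible A R)" for b R
    using Vnn by (intro bdd_belowI2) 
  have innn: "0 \<le> (INF w \<in> admissible A R. V b R w)" for b R
    using zero_adm[of A R] Vnn by (intro cINF_greatest) auto
  have bddO: "bdd_below ((\<lambda>R. INF w \<in> admissible A R. V b R w) ` {1::nat..})" for b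
    using innn by (intro bdd_belowI2)
  have one: "f_hom f A b - L * dist b b' \<le> f_hom f A b'" for b b'
  proof -
    have "f_hom f A b - L * dist b b' \<le> (INF w \<in> admissible A R. V b' R w)" if R: "R \<in> {1::nat..}" for R
    proof (rule cINF_greatest)
      show "admissible A R \<noteq> {}" using zero_adm[of A R] by blast
      fix w assume w: "w \<in> admissible A R"
      have "f_hom f A b \<le> (INF w \<in> admissible A R. V b R w)"
        unfolding fh by (rule cINF_lower[OF bddO R])
      also have "\<dots> \<le> V b R w" by (rule cINF_lower[OF bddI w])
      finally show "f_hom f A b - L * dist b b' \<le> V b' R w" using key[OF w, of b b'] by linarith
    qed
    then show ?thesis unfolding fh[of b'] by (rule_tac cINF_greatest) auto
  qed
  show ?thesis
  proof (rule lipschitz_onI)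
    fix b b' :: "real ^ 'd"
    show "dist (f_hom f A b) (f_hom f A b') \<le> L * dist b b'"
      using one[of b b'] one[of b' b] by (simp add: dist_real_def dist_commute abs_le_iff)
    show "0 \<le> L" using L by simp
  qed
qed
end
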